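(* Let $p_0\ge 2$ be a real number, $\theta=\pi/p_0$, let $N$ be an even positive integer, $u\in\mathbb{C}$, $m\in\{0,1,\dots,N/2\}$, and let $\omega_1,\dots,\omega_m$ be a solution of the Bethe ansatz equations $$-\Biggl(\frac{\sinh\frac{\theta}{2}\bigl(\omega_j+i(u+2)\bigr)\sinh\frac{\theta}{2}(\omega_j-iu)}{\sinh\frac{\theta}{2}\bigl(\omega_j-i(u+2)\bigr)\sinh\frac{\theta}{2}(\omega_j+iu)}\Biggr)^{N/2}=\frac{Q(\omega_j+2i)}{Q(\omega_j-2i)},\qquad j=1,\dots,m,$$ where $Q(v)=\prod_{k=1}^m\sinh\frac{\theta}{2}(v-\omega_k)$. For integers $n\ge 0$ define the meromorphic function of $v$ $$T_{n-1}(v)=\sum_{j=1}^{n}\phi\bigl(v-i(u+n+2-2j)\bigr)\,\phi\bigl(v+i(u-n+2j)\bigr)\,\frac{Q(v+in)\,Q(v-in)}{Q\bigl(v+i(2j-n)\bigr)\,Q\bigl(v+i(2j-n-2)\bigr)},\qquad \phi(v)=\Bigl(\frac{\sinh\frac{\theta}{2}v}{\sin\theta}\Bigr)^{N/2}$$ (so $T_{-1}\equiv 0$). Then for all integers $n\ge y\ge 1$ and all $v\in\mathbb{C}$ (as an identity of meromorphic functions) $$T_{n-1}(v+iy)\,T_{n-1}(v-iy)=T_{n+y-1}(v)\,T_{n-y-1}(v)+T_{y-1}(v+in)\,T_{y-1}(v-in).$$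
   Context: These $T_{n-1}(v)$ (with the dependence on $u$ suppressed) are the eigenvalues, in dressed vacuum form, of the fusion hierarchy of quantum transfer matrices of the six-vertex model associated with the spin-$\frac12$ XXZ chain with anisotropy $\Delta=\cos\theta$; here $\sinh$ denotes the hyperbolic sine. *)

theory Defs
  imports Complex_Main
begin

definition Qf :: "real \<Rightarrow> nat \<Rightarrow> (nat \<Rightarrow> complex) \<Rightarrow> complex \<Rightarrow> complex" where
  "Qf \<theta> m \<omega> v = (\<Prod>k=1..m. sinh (complex_of_real (\<theta>/2) * (v - \<omega> k)))"

definition phif :: "real \<Rightarrow> nat \<Rightarrow> complex \<Rightarrow> complex" where
  "phif \<theta> N v = (sinh (complex_of_real (\<theta>/2) * v) / complex_of_real (sin \<theta>)) ^ (N div 2)"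

text \<open>Tf theta N m omega u n v is T_{n-1}(v) of the paper (so Tf ... 0 v = T_{-1}(v) = 0).\<close>
definition Tf :: "real \<Rightarrow> nat \<Rightarrow> nat \<Rightarrow> (nat \<Rightarrow> complex) \<Rightarrow> complex \<Rightarrow> nat \<Rightarrow> complex \<Rightarrow> complex" where
  "Tf \<theta> N m \<omega> u n v =
     (\<Sum>j=1..n. phif \<theta> N (v - \<i> * (u + of_nat n + 2 - 2 * of_nat j))
               * phif \<theta> N (v + \<i> * (u - of_nat n + 2 * of_nat j))
               * (Qf \<theta> m \<omega> (v + \<i> * of_nat n) * Qf \<theta> m \<omega> (v - \<i> * of_nat n))
               / (Qf \<theta> m \<omega> (v + \<i> * of_int (2 * int j - int n))
                  * Qf \<theta> m \<omega> (v + \<i> * of_int (2 * int j - int n - 2))))"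

end

theory Submission
  imports Defs
begin

definition gfun :: "real \<Rightarrow> nat \<Rightarrow> nat \<Rightarrow> (nat \<Rightarrow> complex) \<Rightarrow> complex \<Rightarrow> complex \<Rightarrow> complex" where
  "gfun \<theta> N m \<omega> u x = phif \<theta> N (x - \<i> * (u + 1)) * phif \<theta> N (x + \<i> * (u + 1))
     / (Qf \<theta> m \<omega> (x + \<i>) * Qf \<theta> m \<omega> (x - \<i>))"

definition Wf :: "(int \<Rightarrow> complex) \<Rightarrow> int \<Rightarrow> nat \<Rightarrow> complex" where
  "Wf h a l = (\<Sum>j<l. h (a + 2 * int j))"

lemma Wf_split: "Wf h a (p + q) = Wf h a p + Wf h (a + 2 * int p) q"
  by (induction q) (simp_all add: Wf_def algebra_simps)

lemma Tshift:
  "Tf \<theta> N m \<omega> u n (v + \<i> * of_int c) =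
     Qf \<theta> m \<omega> (v + \<i> * of_int (c + int n)) * Qf \<theta> m \<omega> (v + \<i> * of_int (c - int n))
     * Wf (\<lambda>k. gfun \<theta> N m \<omega> u (v + \<i> * of_int k)) (c - int n + 1) n"
proof -
  have "Tf \<theta> N m \<omega> u n (v + \<i> * of_int c) = (\<Sum>j<n.
     Qf \<theta> m \<omega> (v + \<i> * of_int (c + int n)) * Qf \<theta> m \<omega> (v + \<i> * of_int (c - int n))
     * gfun \<theta> N m \<omega> u (v + \<i> * of_int (c - int n + 1 + 2 * int j)))"
    unfolding Tf_def One_nat_def sum.atLeast1_atMost_eq
  proof (rule sum.cong[OF refl])
    fix j assume "j \<in> {..<n}"
    define x where "x = v + \<i> * of_int (c - int n + 1 + 2 * int j)"
    have e1: "v + \<i> * of_int c - \<i> * (u + of_nat n + 2 - 2 * of_nat (Suc j)) = x - \<i> * (u + 1)"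
      unfolding x_def by (simp add: algebra_simps)
    have e2: "v + \<i> * of_int c + \<i> * (u - of_nat n + 2 * of_nat (Suc j)) = x + \<i> * (u + 1)"
      unfolding x_def by (simp add: algebra_simps)
    have e3: "v + \<i> * of_int c + \<i> * of_nat n = v + \<i> * of_int (c + int n)"
      by (simp add: algebra_simps)
    have e4: "v + \<i> * of_int c - \<i> * of_nat n = v + \<i> * of_int (c - int n)"
      by (simp add: algebra_simps)
    have e5: "v + \<i> * of_int c + \<i> * of_int (2 * int (Suc j) - int n) = x + \<i>"
      unfolding x_def by (simp add: algebra_simps)
    have e6: "v + \<i> * of_int c + \<i> * of_int (2 * int (Suc j) - int n - 2) = x - \<i>"
      unfolding x_def by (simp add: algebra_simps)
    show "phif \<theta> N (v + \<i> * of_int c - \<i> * (u + of_nat n + 2 - 2 * of_nat (Suc j))) *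
         phif \<theta> N (v + \<i> * of_int c + \<i> * (u - of_nat n + 2 * of_nat (Suc j))) *
         (Qf \<theta> m \<omega> (v + \<i> * of_int c + \<i> * of_nat n) * Qf \<theta> m \<omega> (v + \<i> * of_int c - \<i> * of_nat n)) /
         (Qf \<theta> m \<omega> (v + \<i> * of_int c + \<i> * of_int (2 * int (Suc j) - int n)) *
          Qf \<theta> m \<omega> (v + \<i> * of_int c + \<i> * of_int (2 * int (Suc j) - int n - 2))) =
         Qf \<theta> m \<omega> (v + \<i> * of_int (c + int n)) * Qf \<theta> m \<omega> (v + \<i> * of_int (c - int n)) *
         gfun \<theta> N m \<omega> u (v + \<i> * of_int (c - int n + 1 + 2 * int j))"
      unfolding e1 e2 e3 e4 e5 e6 gfun_def x_def[symmetric] by (simp add: ac_simps)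
  qed
  also have "\<dots> = Qf \<theta> m \<omega> (v + \<i> * of_int (c + int n)) * Qf \<theta> m \<omega> (v + \<i> * of_int (c - int n))
     * Wf (\<lambda>k. gfun \<theta> N m \<omega> u (v + \<i> * of_int k)) (c - int n + 1) n"
    unfolding Wf_def by (simp add: sum_distrib_left)
  finally show ?thesis .
qed

theorem mainTheorem1:
  fixes p0 \<theta> :: real and N m n y :: nat and u v :: complex and \<omega> :: "nat \<Rightarrow> complex"
  assumes "p0 \<ge> 2" and "\<theta> = pi / p0"
    and "even N" and "N > 0"
    and "m \<le> N div 2"
    and BAE_nondeg: "\<forall>j\<in>{1..m}.
           sinh (complex_of_real (\<theta>/2) * (\<omega> j - \<i> * (u + 2)))
             * sinh (complex_of_real (\<theta>/2) * (\<omega> j + \<i> * u)) \<noteq> 0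
           \<and> Qf \<theta> m \<omega> (\<omega> j - 2 * \<i>) \<noteq> 0"
    and BAE: "\<forall>j\<in>{1..m}.
           - (((sinh (complex_of_real (\<theta>/2) * (\<omega> j + \<i> * (u + 2)))
                 * sinh (complex_of_real (\<theta>/2) * (\<omega> j - \<i> * u)))
              / (sinh (complex_of_real (\<theta>/2) * (\<omega> j - \<i> * (u + 2)))
                 * sinh (complex_of_real (\<theta>/2) * (\<omega> j + \<i> * u)))) ^ (N div 2))
           = Qf \<theta> m \<omega> (\<omega> j + 2 * \<i>) / Qf \<theta> m \<omega> (\<omega> j - 2 * \<i>)"
    and "1 \<le> y" and "y \<le> n"
    and v_generic: "\<forall>k::int. Qf \<theta> m \<omega> (v + \<i> * of_int k) \<noteq> 0"
  shows "Tf \<theta> N m \<omega> u n (v + \<i> * of_nat y) * Tf \<theta> N m \<omega> u n (v - \<i> * of_nat y)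
       = Tf \<theta> N m \<omega> u (n + y) v * Tf \<theta> N m \<omega> u (n - y) v
         + Tf \<theta> N m \<omega> u y (v + \<i> * of_nat n) * Tf \<theta> N m \<omega> u y (v - \<i> * of_nat n)"
  proof -
  define H where "H = (\<lambda>k. gfun \<theta> N m \<omega> u (v + \<i> * of_int k))"
  define Q where "Q = (\<lambda>k::int. Qf \<theta> m \<omega> (v + \<i> * of_int k))"
  define X where "X = Wf H (- int n - int y + 1) y"
  define Y where "Y = Wf H (int y - int n + 1) (n - y)"
  define Z where "Z = Wf H (int n - int y + 1) y"
  have ny: "int (n - y) = int n - int y" using assms by simp
  have T: "Tf \<theta> N m \<omega> u l (v + \<i> * of_int c) = Q (c + int l) * Q (c - int l) * Wf H (c - int l + 1) l" for l c
    unfolding Q_def H_def by (rule Tshift)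
  have a1: "v + \<i> * of_nat y = v + \<i> * of_int (int y)" by simp
  have a2: "v - \<i> * of_nat y = v + \<i> * of_int (- int y)" by simp
  have a3: "v = v + \<i> * of_int 0" by simp
  have a4: "v + \<i> * of_nat n = v + \<i> * of_int (int n)" by simp
  have a5: "v - \<i> * of_nat n = v + \<i> * of_int (- int n)" by simp
  have t1: "Tf \<theta> N m \<omega> u n (v + \<i> * of_nat y) = Q (int y + int n) * Q (int y - int n) * (Y + Z)"
  proof -
    have "Wf H (int y - int n + 1) ((n - y) + y) = Y + Z"
      unfolding Wf_split Y_def Z_def using ny by (simp add: algebra_simps)
    then show ?thesis unfolding a1 T using assms by simp
  qed
  have t2: "Tf \<theta> N m \<omega> u n (v - \<i> * of_nat y) = Q (int n - int y) * Q (- int y - int n) * (X + Y)"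
  proof -
    have "Wf H (- int n - int y + 1) (y + (n - y)) = X + Y"
      unfolding Wf_split X_def Y_def by (simp add: algebra_simps)
    then show ?thesis unfolding a2 T using assms by (simp add: algebra_simps)
  qed
  have t3: "Tf \<theta> N m \<omega> u (n + y) v = Q (int y + int n) * Q (- int y - int n) * (X + Y + Z)"
  proof -
    have "Wf H (- int n - int y + 1) (y + (n - y) + y) = X + Y + Z"
      unfolding Wf_split X_def Y_def Z_def using ny by (simp add: algebra_simps)
    moreover have "y + (n - y) + y = n + y" using assms by simp
    ultimately have W: "Wf H (- int n - int y + 1) (n + y) = X + Y + Z" by simp
    have "Tf \<theta> N m \<omega> u (n + y) (v + \<i> * of_int 0) = Q (0 + int (n + y)) * Q (0 - int (n + y)) * Wf H (0 - int (n + y) + 1) (n + y)"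
      by (rule T)
    also have "0 - int (n + y) + 1 = - int n - int y + 1" by simp
    also have "0 + int (n + y) = int y + int n" by simp
    also have "0 - int (n + y) = - int y - int n" by simp
    finally show ?thesis using W by simp
  qed
  have t4: "Tf \<theta> N m \<omega> u (n - y) v = Q (int n - int y) * Q (int y - int n) * Y"
    by (subst a3, subst T) (simp add: ny Y_def algebra_simps)
  have t5: "Tf \<theta> N m \<omega> u y (v + \<i> * of_nat n) = Q (int y + int n) * Q (int n - int y) * Z"
    unfolding a4 T Z_def by (simp add: algebra_simps)
  have t6: "Tf \<theta> N m \<omega> u y (v - \<i> * of_nat n) = Q (int y - int n) * Q (- int y - int n) * X"
  proof -
    have e: "- int n - int y = - int y - int n" by simp
    show ?thesis unfolding a5 T X_def by (simp add: algebra_simps e)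
  qed
  show ?thesis unfolding t1 t2 t3 t4 t5 t6 by (simp add: algebra_simps)
qed

end
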